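(* Under Assumption A with $T>0$, let $\bar\alpha\in(\alpha_\nu-1/T,+\infty)$ be any solution of the fixed point equation $\alpha=\alpha_\nu-\frac1T+\frac{G(\alpha,2)}{2T^2}$. Then $$\frac{\alpha_\nu}{2}-\frac1T-\frac{L}{2T^2\alpha_\nu\beta_\mu}+\frac12\sqrt{\Big(\alpha_\nu+\frac{L}{T^2\beta_\mu\alpha_\nu}\Big)^2+\frac{4\alpha_\nu}{T^2\beta_\mu}}\;\le\;\bar\alpha\;\le\;\frac{\alpha_\nu}{2}-\frac1T+\frac12\sqrt{\alpha_\nu^2+\frac{4\alpha_\nu}{T^2\beta_\mu}}.$$
   Context: For $L>0$ let $f_L(r)=2L^{1/2}\tanh(rL^{1/2}/2)$ for $r\ge0$. For a differentiable $U:\mathbb{R}^d\to\mathbb{R}$ and $r>0$ let $\kappa_U(r)=\inf\{|x-y|^{-2}\langle\nabla U(x)-\nabla U(y),x-y\rangle:|x-y|=r\}$. Assumption A: $\mu(\mathrm{d}x)=e^{-U^\mu(x)}\mathrm{d}x$, $\nu(\mathrm{d}y)=e^{-U^\nu(y)}\mathrm{d}y$ probability measures on $\mathbb{R}^d$, $U^\mu,U^\nu\in C^2$; $\mu$ has finite second moment and finite entropy w.r.t. Lebesgue, and $\langle v,\nabla^2U^\mu(x)v\rangle\le\beta_\mu|v|^2$ for all $x,v$ with $\beta_\mu>0$; and there exist $\alpha_\nu>0,L>0$ with $\kappa_{U^\nu}(r)\ge\alpha_\nu-r^{-1}f_L(r)$ for all $r>0$. For $\alpha\ge\alpha_\nu-1/T$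 define $F(\alpha,s)=\beta_\mu s+\frac{s}{T(1+T\alpha)}+\frac{s^{1/2}f_L(s^{1/2})}{(1+T\alpha)^2}$ for $s>0$, and $G(\alpha,u)=\inf\{s\ge0:F(\alpha,s)\ge u\}$ for $u>0$. *)

theory Defs
  imports "HOL-Analysis.Analysis" "HOL-Probability.Probability"
begin

definition fL :: "real \<Rightarrow> real \<Rightarrow> real" where
  "fL L r = 2 * sqrt L * tanh (r * sqrt L / 2)"

text \<open>kappa_U(r), with gradient gU of U; infimum taken in the extended reals
  so that it is the true infimum (possibly -infinity).\<close>
definition kappa :: "('a::euclidean_space \<Rightarrow> 'a) \<Rightarrow> real \<Rightarrow> ereal" where
  "kappa gU r = Inf {ereal (((gU x - gU y) \<bullet> (x - y)) / (norm (x - y))\<^sup>2) | x y. norm (x - y) = r}"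

definition Ffun :: "real \<Rightarrow> real \<Rightarrow> real \<Rightarrow> real \<Rightarrow> real \<Rightarrow> real" where
  "Ffun beta_mu T L \<alpha> s = beta_mu * s + s / (T * (1 + T * \<alpha>))
      + sqrt s * fL L (sqrt s) / (1 + T * \<alpha>)\<^sup>2"

definition Gfun :: "real \<Rightarrow> real \<Rightarrow> real \<Rightarrow> real \<Rightarrow> real \<Rightarrow> real" where
  "Gfun beta_mu T L \<alpha> u = Inf {s. s \<ge> 0 \<and> Ffun beta_mu T L \<alpha> s \<ge> u}"

definition C2_with :: "('a::euclidean_space \<Rightarrow> real) \<Rightarrow> ('a \<Rightarrow> 'a) \<Rightarrow> ('a \<Rightarrow> 'a \<Rightarrow>\<^sub>L 'a) \<Rightarrow> bool" where
  "C2_with U gU H \<longleftrightarrow>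
     (\<forall>x. (U has_derivative (\<lambda>h. gU x \<bullet> h)) (at x)) \<and>
     (\<forall>x. (gU has_derivative blinfun_apply (H x)) (at x)) \<and>
     continuous_on UNIV H"

end

theory Submission imports Defs begin
lemma tanh_le: "(y::real) \<ge> 0 \<Longrightarrow> tanh y \<le> y"
proof -
  assume y: "y \<ge> 0"
  have "(\<lambda>x. x - tanh x) 0 \<le> (\<lambda>x. x - tanh x) y"
  proof (rule DERIV_nonneg_imp_increasing_open[OF y])
    fix x :: real
    show "\<exists>d. ((\<lambda>x. x - tanh x) has_real_derivative d) (at x) \<and> d \<ge> 0"
      by (rule exI[of _ "1 - (1 - tanh x ^ 2)"])
         (auto intro!: derivative_eq_intros)
    show "continuous_on {0..y} (\<lambda>x. x - tanh x)"
      by (intro continuous_intros) auto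
  qed
  then show ?thesis by simp
qed

lemma fL_bounds: assumes "L > 0" "r \<ge> 0" shows "0 \<le> r * fL L r" "r * fL L r \<le> L * r^2"
proof -
  have t: "tanh (r * sqrt L / 2) \<le> r * sqrt L / 2" using assms by (intro tanh_le) simp
  have t0: "tanh (r * sqrt L / 2) \<ge> 0" using assms by simp
  show "0 \<le> r * fL L r" unfolding fL_def using assms t0 by simp
  have "r * fL L r \<le> r * (2 * sqrt L * (r * sqrt L / 2))" unfolding fL_def
    using assms t by (intro mult_left_mono) auto
  also have "\<dots> = L * r^2" using assms by (simp add: power2_eq_square)
  finally show "r * fL L r \<le> L * r^2" .
qed

lemma G_bounds:
  assumes b: "b > 0" and T: "T > 0" and c: "1 + T * a > 0" and L: "L > 0"
  shows "2 / (b + 1/(T*(1+T*a)) + L/(1+T*a)^2) \<le> Gfun b T L a 2"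
        "Gfun b T L a 2 \<le> 2 / (b + 1/(T*(1+T*a)))"
proof -
  define c where "c = 1 + T * a"
  have cp: "c > 0" using c c_def by simp
  define S where "S = {s. s \<ge> 0 \<and> Ffun b T L a s \<ge> 2}"
  have up: "Ffun b T L a s \<le> s * (b + 1/(T*c) + L/c^2)" if "s \<ge> 0" for s
  proof -
    have "sqrt s * fL L (sqrt s) \<le> L * s" using fL_bounds(2)[OF L, of "sqrt s"] that by simp
    then have "sqrt s * fL L (sqrt s) / c^2 \<le> L * s / c^2" using cp by (simp add: divide_right_mono)
    then show ?thesis unfolding Ffun_def c_def[symmetric] by (simp add: algebra_simps)
  qed
  have lo: "Ffun b T L a s \<ge> s * (b + 1/(T*c))" if "s \<ge> 0" for s
  proof -
    have "sqrt s * fL L (sqrt s) \<ge> 0" using fL_bounds(1)[OF L, of "sqrt s"] that by simp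
    then have "sqrt s * fL L (sqrt s) / c^2 \<ge> 0" using cp by simp
    then show ?thesis unfolding Ffun_def c_def[symmetric] by (simp add: algebra_simps)
  qed
  have pos1: "b + 1/(T*c) > 0" using b T cp by (simp add: add_pos_pos)
  have pos2: "b + 1/(T*c) + L/c^2 > 0" using pos1 L cp by (simp add: add_pos_pos)
  define s0 where "s0 = 2 / (b + 1/(T*c))"
  have e: "s0 * (b + 1/(T*c)) = 2" using pos1 unfolding s0_def by (metis less_irrefl nonzero_divide_mult_cancel_right divide_self_if times_divide_eq_left mult.commute nonzero_mult_div_cancel_left)
  have "s0 \<ge> 0" using pos1 unfolding s0_def by simp
  then have s0S: "s0 \<in> S" unfolding S_def using lo[of s0] e by simp
  have "Inf S \<le> s0" by (rule cInf_lower[OF s0S]) (auto simp: S_def bdd_below_def)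
  then show "Gfun b T L a 2 \<le> 2 / (b + 1/(T*(1+T*a)))"
    unfolding Gfun_def S_def s0_def c_def by simp
  have "2 / (b + 1/(T*c) + L/c^2) \<le> Inf S"
  proof (rule cInf_greatest)
    show "S \<noteq> {}" using s0S by auto
    fix s assume "s \<in> S"
    then have "s \<ge> 0" "2 \<le> s * (b + 1/(T*c) + L/c^2)" unfolding S_def using up by (auto intro: order_trans)
    then show "2 / (b + 1/(T*c) + L/c^2) \<le> s" using pos2 by (simp add: divide_le_eq)
  qed
  then show "2 / (b + 1/(T*(1+T*a)) + L/(1+T*a)^2) \<le> Gfun b T L a 2"
    unfolding Gfun_def S_def c_def by simp
qed

lemma quad_upper:
  fixes x a k :: real assumes k: "k > 0" and a: "a > 0" and q: "k*x^2 - a*k*x - a \<le> 0"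
  shows "x \<le> a/2 + sqrt (a^2 + 4*a/k) / 2"
proof -
  have "(2*x - a)^2 = 4*(k*x^2 - a*k*x - a)/k + a^2 + 4*a/k" using k
    by (simp add: field_simps power2_eq_square)
  also have "\<dots> \<le> a^2 + 4*a/k" using q k by (simp add: divide_nonpos_pos)
  finally have "2*x - a \<le> sqrt (a^2 + 4*a/k)" by (simp add: real_le_rsqrt)
  then show ?thesis by simp
qed

lemma quad_lower:
  fixes x p q :: real assumes x: "x > 0" and q0: "q > 0" and h: "x^2 - p*x - q \<ge> 0"
  shows "p/2 + sqrt (p^2 + 4*q) / 2 \<le> x"
proof -
  have nn: "2*x - p \<ge> 0"
  proof (rule ccontr)
    assume "\<not> ?thesis"
    then have "x - p < 0" using x by simp
    then have "x * (x - p) < 0" using x by (simp add: mult_pos_neg)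
    then show False using h q0 by (simp add: power2_eq_square algebra_simps)
  qed
  have "(2*x - p)^2 = 4*(x^2 - p*x - q) + (p^2 + 4*q)" by (simp add: power2_eq_square algebra_simps)
  then have "p^2 + 4*q \<le> (2*x-p)^2" using h by simp
  then have "sqrt (p^2 + 4*q) \<le> 2*x - p" using nn by (simp add: real_le_lsqrt)
  then show ?thesis by simp
qed

theorem mainTheorem2:
  fixes U_mu U_nu :: "'a::euclidean_space \<Rightarrow> real"
    and g_mu g_nu :: "'a \<Rightarrow> 'a"
    and H_mu H_nu :: "'a \<Rightarrow> 'a \<Rightarrow>\<^sub>L 'a"
    and beta_mu alpha_nu L T alphabar :: real
  assumes C2_mu: "C2_with U_mu g_mu H_mu"
    and C2_nu: "C2_with U_nu g_nu H_nu"
    and prob_mu: "prob_space (density lborel (\<lambda>x. ennreal (exp (- U_mu x))))"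
    and prob_nu: "prob_space (density lborel (\<lambda>y. ennreal (exp (- U_nu y))))"
    and second_moment_mu: "integrable lborel (\<lambda>x. (norm x)\<^sup>2 * exp (- U_mu x))"
    and entropy_mu: "integrable lborel (\<lambda>x. exp (- U_mu x) * ln (exp (- U_mu x)))"
    and beta_pos: "beta_mu > 0"
    and hess_bound: "\<And>x v. v \<bullet> blinfun_apply (H_mu x) v \<le> beta_mu * (norm v)\<^sup>2"
    and alpha_pos: "alpha_nu > 0"
    and L_pos: "L > 0"
    and kappa_bound: "\<And>r. r > 0 \<Longrightarrow> kappa g_nu r \<ge> ereal (alpha_nu - fL L r / r)"
    and T_pos: "T > 0"
    and alphabar_dom: "alphabar > alpha_nu - 1 / T"
    and fixed_point: "alphabar = alpha_nu - 1 / T + Gfun beta_mu T L alphabar 2 / (2 * T\<^sup>2)"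
  shows "alpha_nu / 2 - 1 / T - L / (2 * T\<^sup>2 * alpha_nu * beta_mu)
           + sqrt ((alpha_nu + L / (T\<^sup>2 * beta_mu * alpha_nu))\<^sup>2 + 4 * alpha_nu / (T\<^sup>2 * beta_mu)) / 2
         \<le> alphabar
       \<and> alphabar \<le> alpha_nu / 2 - 1 / T + sqrt (alpha_nu\<^sup>2 + 4 * alpha_nu / (T\<^sup>2 * beta_mu)) / 2"
proof -
  define x where "x = alphabar + 1/T"
  define k where "k = T^2 * beta_mu"
  define G where "G = Gfun beta_mu T L alphabar 2"
  have kp: "k > 0" using T_pos beta_pos k_def by simp
  have xa: "x > alpha_nu" using alphabar_dom x_def by simp
  have xp: "x > 0" using xa alpha_pos by simp
  have c: "1 + T*alphabar = T*x" using T_pos x_def by (simp add: field_simps)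
  have cp: "1 + T*alphabar > 0" using c T_pos xp by simp
  have fx: "x - alpha_nu = G / (2*T^2)" using fixed_point x_def G_def by simp
  have Gu: "G \<le> 2 / (beta_mu + 1/(T*(T*x)))" using G_bounds(2)[OF beta_pos T_pos cp L_pos] c G_def by simp
  have Gl: "2 / (beta_mu + 1/(T*(T*x)) + L/(T*x)^2) \<le> G" using G_bounds(1)[OF beta_pos T_pos cp L_pos] c G_def by simp
  have d1: "T*(T*(beta_mu*x)) > 0" using T_pos xp beta_pos by simp
  have d2: "T*(T*(beta_mu*(x*x))) > 0" using T_pos xp beta_pos by simp
  have T2: "T^2 > 0" using T_pos by simp
  have s1: "beta_mu + 1/(T*(T*x)) = (k*x+1)/(T^2*x)"
    using T_pos xp unfolding k_def by (simp add: field_simps power2_eq_square)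
  have s2: "beta_mu + 1/(T*(T*x)) + L/(T*x)^2 = (k*x^2+x+L)/(T^2*x^2)"
    using T_pos xp unfolding k_def by (simp add: field_simps power2_eq_square)
  have e1: "2 / (beta_mu + 1/(T*(T*x))) / (2*T^2) = x/(k*x+1)"
    unfolding s1 using T_pos xp by (simp add: power2_eq_square)
  have e2: "2 / (beta_mu + 1/(T*(T*x)) + L/(T*x)^2) / (2*T^2) = x^2/(k*x^2+x+L)"
    unfolding s2 using T_pos xp by (simp add: power2_eq_square)
  have "x - alpha_nu \<le> x/(k*x+1)" using fx Gu e1 T_pos by (metis divide_right_mono zero_le_numeral zero_le_power2 mult_nonneg_nonneg)
  moreover have "k*x+1 > 0" using kp xp by (simp add: add_pos_pos)
  ultimately have "(x - alpha_nu)*(k*x+1) \<le> x" by (simp add: le_divide_eq)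
  then have "k*x^2 - alpha_nu*k*x - alpha_nu \<le> 0" by (simp add: algebra_simps power2_eq_square)
  from quad_upper[OF kp alpha_pos this]
  have up: "x \<le> alpha_nu/2 + sqrt (alpha_nu^2 + 4*alpha_nu/k) / 2" .
  have "x^2/(k*x^2+x+L) \<le> x - alpha_nu" using fx Gl e2 T_pos by (metis divide_right_mono zero_le_numeral zero_le_power2 mult_nonneg_nonneg)
  moreover have dp: "k*x^2+x+L > 0" using kp xp L_pos by (simp add: add_pos_pos)
  ultimately have h1: "x^2 \<le> (x - alpha_nu)*(k*x^2+x+L)" by (simp add: divide_le_eq)
  have "(x - alpha_nu)*L \<le> (x - alpha_nu)*(L*x/alpha_nu)"
  proof (rule mult_left_mono)
    show "L \<le> L*x/alpha_nu" using xa alpha_pos L_pos by (simp add: le_divide_eq)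
  qed (use xa in simp)
  then have "x^2 \<le> (x - alpha_nu)*(k*x^2+x+L*x/alpha_nu)" using h1 by (simp add: algebra_simps)
  also have "\<dots> = x * ((x - alpha_nu)*(k*x+1+L/alpha_nu))" by (simp add: algebra_simps power2_eq_square)
  finally have "x * x \<le> x * ((x - alpha_nu)*(k*x+1+L/alpha_nu))" by (simp add: power2_eq_square)
  then have "x \<le> (x - alpha_nu)*(k*x+1+L/alpha_nu)" using xp by simp
  moreover have "(x - alpha_nu)*(k*x+1+L/alpha_nu) - x = k*(x^2 - (alpha_nu - L/(k*alpha_nu))*x - (alpha_nu+L)/k)"
    using kp alpha_pos by (simp add: algebra_simps power2_eq_square add_divide_distrib diff_divide_distrib)
  ultimately have h2: "0 \<le> k*(x^2 - (alpha_nu - L/(k*alpha_nu))*x - (alpha_nu+L)/k)" by linarith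
  have "0 \<le> x^2 - (alpha_nu - L/(k*alpha_nu))*x - (alpha_nu+L)/k"
    using h2 kp by (simp add: zero_le_mult_iff)
  from quad_lower[OF xp _ this] have lo:
    "(alpha_nu - L/(k*alpha_nu))/2 + sqrt ((alpha_nu - L/(k*alpha_nu))^2 + 4*((alpha_nu+L)/k))/2 \<le> x"
    using kp alpha_pos L_pos by simp
  have eq: "(alpha_nu - L/(k*alpha_nu))^2 + 4*((alpha_nu+L)/k) = (alpha_nu + L / (T\<^sup>2 * beta_mu * alpha_nu))\<^sup>2 + 4 * alpha_nu / (T\<^sup>2 * beta_mu)"
    using kp alpha_pos T_pos beta_pos unfolding k_def by (simp add: field_simps power2_eq_square)
  show ?thesis
  proof
    show "alpha_nu / 2 - 1 / T - L / (2 * T\<^sup>2 * alpha_nu * beta_mu)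
           + sqrt ((alpha_nu + L / (T\<^sup>2 * beta_mu * alpha_nu))\<^sup>2 + 4 * alpha_nu / (T\<^sup>2 * beta_mu)) / 2
         \<le> alphabar" using lo[unfolded eq] unfolding x_def k_def by (simp add: field_simps)
    show "alphabar \<le> alpha_nu / 2 - 1 / T + sqrt (alpha_nu\<^sup>2 + 4 * alpha_nu / (T\<^sup>2 * beta_mu)) / 2"
      using up unfolding x_def k_def by simp
  qed
qed

end
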